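(* Let $0<s_1<s_2<1$, $2s_1<d<\frac{2s_1s_2}{s_2-s_1}$, $a>0$, and suppose $g$ satisfies $(G_1)$–$(G_3)$. Then $m_a>0$.
   Context: For $s\in(0,1)$, $|\nabla_s u|_2^2=\int_{\mathbb{R}^d\times\mathbb{R}^d}\frac{|u(x)-u(y)|^2}{|x-y|^{d+2s}}dx\,dy$; $|\cdot|_p$ is the $L^p(\mathbb{R}^d)$ norm; $H^{s_1,s_2}(\mathbb{R}^d)=\{u\in L^2(\mathbb{R}^d):|\nabla_{s_1}u|_2<\infty,\ |\nabla_{s_2}u|_2<\infty\}$. $S_a=\{u\in H^{s_1,s_2}(\mathbb{R}^d):|u|_2^2=a\}$. $g:\mathbb{R}\to\mathbb{R}$, $G(s)=\int_0^sg$, $\widetilde G(s)=\frac12g(s)s-G(s)$. $(G_1)$: $g$ continuous, odd. $(G_2)$: there exist $\alpha,\beta$ with $2+\frac{4s_2}{d}<\alpha<\beta<\frac{2d}{d-2s_1}$ and $\alpha G(s)\le g(s)s\le\beta G(s)$ for all $s$. $(G_3)$: $\widetilde G'$ exists and $\widetilde G'(s)s\ge\alpha\widetilde G(s)$ for all $s$. $I(u)=\frac12|\nabla_{s_1}u|_2^2+\frac12|\nabla_{s_2}u|_2^2-\int_{\mathbb{R}^d}G(u)dx$; $P_\infty(u)=s_1|\nabla_{s_1}u|_2^2+s_2|\nabla_{s_2}u|_2^2-d\int_{\mathbb{R}^d}\widetilde G(u)dx$; $\mathcal{P}_{\infty,a}=\{u\in S_a:P_\infty(u)=0\}$; $m_a=\inf_{u\in\mathcal{P}_{\infty,a}}I(u)$.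 *)

theory Defs
  imports "HOL-Analysis.Analysis"
begin

text \<open>Dimension d = CARD('n); functions u : real^'n \<Rightarrow> real.\<close>

definition gagliardo :: "real \<Rightarrow> (real^'n \<Rightarrow> real) \<Rightarrow> ennreal" where
  "gagliardo s u =
     (\<integral>\<^sup>+ z. ennreal ((u (fst z) - u (snd z))^2
                 / norm (fst z - snd z) powr (real CARD('n) + 2 * s)) \<partial>(lborel \<Otimes>\<^sub>M lborel))"

definition Hspace :: "real \<Rightarrow> real \<Rightarrow> (real^'n \<Rightarrow> real) set" where
  "Hspace s1 s2 = {u. u \<in> borel_measurable lborel \<and> integrable lborel (\<lambda>x. (u x)^2)
                      \<and> gagliardo s1 u < \<infinity> \<and> gagliardo s2 u < \<infinity>}"

text \<open>G(s) = \<int>_0^s g (oriented integral).\<close>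
definition Gprim :: "(real \<Rightarrow> real) \<Rightarrow> real \<Rightarrow> real" where
  "Gprim g s = (LBINT t=0..s. g t)"

definition Gtilde :: "(real \<Rightarrow> real) \<Rightarrow> real \<Rightarrow> real" where
  "Gtilde g s = g s * s / 2 - Gprim g s"

definition energy :: "real \<Rightarrow> real \<Rightarrow> (real \<Rightarrow> real) \<Rightarrow> (real^'n \<Rightarrow> real) \<Rightarrow> real" where
  "energy s1 s2 g u = enn2real (gagliardo s1 u) / 2 + enn2real (gagliardo s2 u) / 2
                       - (\<integral>x. Gprim g (u x) \<partial>lborel)"

definition Pinf :: "real \<Rightarrow> real \<Rightarrow> (real \<Rightarrow> real) \<Rightarrow> (real^'n \<Rightarrow> real) \<Rightarrow> real" where
  "Pinf s1 s2 g u = s1 * enn2real (gagliardo s1 u) + s2 * enn2real (gagliardo s2 u)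
                     - real CARD('n) * (\<integral>x. Gtilde g (u x) \<partial>lborel)"

definition Ssphere :: "real \<Rightarrow> real \<Rightarrow> real \<Rightarrow> (real^'n \<Rightarrow> real) set" where
  "Ssphere s1 s2 a = {u \<in> Hspace s1 s2. (\<integral>x. (u x)^2 \<partial>lborel) = a}"

definition Pohozaev_set :: "real \<Rightarrow> real \<Rightarrow> (real \<Rightarrow> real) \<Rightarrow> real \<Rightarrow> (real^'n \<Rightarrow> real) set" where
  "Pohozaev_set s1 s2 g a = {u \<in> Ssphere s1 s2 a. Pinf s1 s2 g u = 0}"

text \<open>m_a as an extended-real infimum (Inf of empty set = \<infinity>).\<close>
definition m_level :: "'n::finite itself \<Rightarrow> real \<Rightarrow> real \<Rightarrow> (real \<Rightarrow> real) \<Rightarrow> real \<Rightarrow> ereal" where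
  "m_level _ s1 s2 g a =
     (INF u \<in> (Pohozaev_set s1 s2 g a :: (real^'n \<Rightarrow> real) set). ereal (energy s1 s2 g u))"

end

theory Submission
  imports Defs
begin

lemma Gprim_deriv:
  assumes "continuous_on UNIV g"
  shows "(Gprim g has_real_derivative g x) (at x)"
proof -
  define a where "a = min 0 x - 1"
  define b where "b = max 0 x + 1"
  have "((\<lambda>u. LBINT y=ereal 0..u. g y) has_vector_derivative (g x)) (at x within {a..b})"
    by (rule interval_integral_FTC2) (auto simp: a_def b_def intro: continuous_on_subset[OF assms])
  moreover have "at x within {a..b} = at x"
    by (rule at_within_Icc_at) (auto simp: a_def b_def)
  ultimately show ?thesis
    by (simp add: Gprim_def[abs_def] has_real_derivative_iff_has_vector_derivative zero_ereal_def)
qed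

lemma pow_bound_lower:
  fixes F f :: "real \<Rightarrow> real"
  assumes D: "\<And>s. s > 0 \<Longrightarrow> (F has_real_derivative f s) (at s)"
    and I: "\<And>s. s > 0 \<Longrightarrow> p * F s \<le> f s * s"
    and s: "0 < s" "s \<le> 1"
  shows "F s \<le> F 1 * s powr p"
proof -
  define h where "h t = F t * t powr (-p)" for t
  have "h s \<le> h 1"
  proof (rule DERIV_nonneg_imp_nondecreasing[OF s(2)])
    fix x assume "s \<le> x" "x \<le> 1"
    then have x: "s \<le> x \<and> x \<le> 1" by simp
    then have x0: "x > 0" using s by auto
    have "(h has_real_derivative f x * x powr (-p) + F x * (-p * x powr (-p - 1))) (at x)"
      unfolding h_def using x0 D[OF x0]
      by (auto intro!: derivative_eq_intros)
    moreover have "f x * x powr (-p) + F x * (-p * x powr (-p - 1)) = x powr (-p - 1) * (f x * x - p * F x)"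
      using x0 by (simp add: powr_diff powr_minus field_simps)
    moreover have "x powr (-p - 1) * (f x * x - p * F x) \<ge> 0"
      using I[OF x0] by simp
    ultimately show "\<exists>y. (h has_real_derivative y) (at x) \<and> 0 \<le> y" by metis
  qed
  then have "F s * s powr (-p) \<le> F 1" by (simp add: h_def)
  then have "F s * s powr (-p) * s powr p \<le> F 1 * s powr p"
    by (rule mult_right_mono) simp
  then show ?thesis using s by (simp add: powr_minus field_simps)
qed

lemma pow_bound_upper:
  fixes F f :: "real \<Rightarrow> real"
  assumes D: "\<And>s. s > 0 \<Longrightarrow> (F has_real_derivative f s) (at s)"
    and I: "\<And>s. s > 0 \<Longrightarrow> f s * s \<le> q * F s"
    and s: "1 \<le> s"
  shows "F s \<le> F 1 * s powr q"
proof -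
  define h where "h t = F t * t powr (-q)" for t
  have "h s \<le> h 1"
  proof (rule DERIV_nonpos_imp_nonincreasing[OF s])
    fix x assume "1 \<le> x" "x \<le> s"
    then have x: "1 \<le> x \<and> x \<le> s" by simp
    then have x0: "x > 0" by auto
    have "(h has_real_derivative f x * x powr (-q) + F x * (-q * x powr (-q - 1))) (at x)"
      unfolding h_def using x0 D[OF x0]
      by (auto intro!: derivative_eq_intros)
    moreover have "f x * x powr (-q) + F x * (-q * x powr (-q - 1)) = x powr (-q - 1) * (f x * x - q * F x)"
      using x0 by (simp add: powr_diff powr_minus field_simps)
    moreover have "x powr (-q - 1) * (f x * x - q * F x) \<le> 0"
      using I[OF x0] by (simp add: mult_nonneg_nonpos)
    ultimately show "\<exists>y. (h has_real_derivative y) (at x) \<and> y \<le> 0" by metis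
  qed
  then have "F s * s powr (-q) \<le> F 1" by (simp add: h_def)
  then have "F s * s powr (-q) * s powr q \<le> F 1 * s powr q"
    by (rule mult_right_mono) simp
  then show ?thesis using s by (simp add: powr_minus field_simps)
qed

definition phi :: "real \<Rightarrow> real \<Rightarrow> real \<Rightarrow> real" where
  "phi al be r = (if r \<le> 1 then r powr al else r powr be)"

lemma G_bounds:
  fixes g :: "real \<Rightarrow> real" and \<alpha> \<beta> :: real
  assumes cont: "continuous_on UNIV g"
    and ineq: "\<And>s. \<alpha> * Gprim g s \<le> g s * s \<and> g s * s \<le> \<beta> * Gprim g s"
    and ab: "2 < \<alpha>" "\<alpha> < \<beta>"
  shows "\<And>s. Gprim g s \<ge> 0"
    and "\<And>s. Gtilde g s \<ge> 0"
    and "\<And>s. Gtilde g s \<le> (\<beta>/2 - 1) * max (Gprim g 1) (Gprim g (-1)) * phi \<alpha> \<beta> \<bar>s\<bar>"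
proof -
  show G0: "Gprim g s \<ge> 0" for s
  proof -
    have "\<alpha> * Gprim g s \<le> \<beta> * Gprim g s" using ineq[of s] by linarith
    then have "0 \<le> (\<beta> - \<alpha>) * Gprim g s" by (simp add: algebra_simps)
    then show ?thesis using ab by (simp add: zero_le_mult_iff)
  qed
  show "Gtilde g s \<ge> 0" for s
  proof -
    have "\<alpha> * Gprim g s / 2 - Gprim g s = (\<alpha>/2 - 1) * Gprim g s" by (simp add: algebra_simps)
    also have "\<dots> \<ge> 0" using G0[of s] ab by simp
    finally have "\<alpha> * Gprim g s / 2 - Gprim g s \<ge> 0" .
    then show ?thesis using ineq[of s] unfolding Gtilde_def by linarith
  qed
  define cG where "cG = max (Gprim g 1) (Gprim g (-1))"
  have D: "(Gprim g has_real_derivative g x) (at x)" for x by (rule Gprim_deriv[OF cont])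
  have Dn: "((\<lambda>t. Gprim g (-t)) has_real_derivative (- g (-x))) (at x)" for x
  proof -
    have "((\<lambda>t. Gprim g (-t)) has_real_derivative g (-x) * (-1)) (at x)"
      by (rule DERIV_chain2[where g=uminus and f="Gprim g"]) (use D in \<open>auto intro!: derivative_eq_intros\<close>)
    then show ?thesis by simp
  qed
  have Gle: "Gprim g s \<le> cG * phi \<alpha> \<beta> \<bar>s\<bar>" for s
  proof (cases "s = 0")
    case True
    then have "Gprim g s \<le> 0" using ineq[of 0] ab by (simp add: mult_le_0_iff)
    then show ?thesis using True by (simp add: phi_def)
  next
    case False
    show ?thesis
    proof (cases "s > 0")
      case True
      show ?thesis
      proof (cases "s \<le> 1")
        case True
        have "Gprim g s \<le> Gprim g 1 * s powr \<alpha>"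
          by (rule pow_bound_lower[where f=g]) (use D ineq \<open>s>0\<close> True in auto)
        also have "\<dots> \<le> cG * s powr \<alpha>" by (rule mult_right_mono) (auto simp: cG_def)
        finally show ?thesis using True \<open>s > 0\<close> by (simp add: phi_def)
      next
        case False
        have "Gprim g s \<le> Gprim g 1 * s powr \<beta>"
          by (rule pow_bound_upper[where f=g]) (use D ineq False in auto)
        also have "\<dots> \<le> cG * s powr \<beta>" by (rule mult_right_mono) (auto simp: cG_def)
        finally show ?thesis using False \<open>s > 0\<close> by (simp add: phi_def)
      qed
    next
      case False
      then have sn: "-s > 0" using \<open>s \<noteq> 0\<close> by simp
      have In: "\<alpha> * Gprim g (-t) \<le> - g (-t) * t" "- g (-t) * t \<le> \<beta> * Gprim g (-t)" for t
        using ineq[of "-t"] by auto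
      show ?thesis
      proof (cases "-s \<le> 1")
        case True
        have "Gprim g (-(-s)) \<le> Gprim g (-1) * (-s) powr \<alpha>"
          by (rule pow_bound_lower[where F="\<lambda>t. Gprim g (-t)" and f="\<lambda>t. - g (-t)"]) (use Dn In sn True in auto)
        also have "\<dots> \<le> cG * (-s) powr \<alpha>" by (rule mult_right_mono) (auto simp: cG_def)
        finally show ?thesis using True sn by (simp add: phi_def)
      next
        case False
        have "Gprim g (-(-s)) \<le> Gprim g (-1) * (-s) powr \<beta>"
          by (rule pow_bound_upper[where F="\<lambda>t. Gprim g (-t)" and f="\<lambda>t. - g (-t)"]) (use Dn In False in auto)
        also have "\<dots> \<le> cG * (-s) powr \<beta>" by (rule mult_right_mono) (auto simp: cG_def)
        finally show ?thesis using False sn by (simp add: phi_def)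
      qed
    qed
  qed
  show "Gtilde g s \<le> (\<beta>/2 - 1) * cG * phi \<alpha> \<beta> \<bar>s\<bar>" for s
  proof -
    have "Gtilde g s \<le> (\<beta>/2 - 1) * Gprim g s" using ineq[of s] unfolding Gtilde_def
      by (simp add: field_simps)
    also have "\<dots> \<le> (\<beta>/2 - 1) * (cG * phi \<alpha> \<beta> \<bar>s\<bar>)"
      by (rule mult_left_mono[OF Gle]) (use ab in simp)
    finally show ?thesis by simp
  qed
qed

lemma meas_S:
  fixes u :: "real^'n \<Rightarrow> real"
  assumes um: "u \<in> borel_measurable lborel"
  shows "{z::(real^'n)\<times>(real^'n). l' \<le> \<bar>u (fst z)\<bar> \<and> \<bar>u (snd z)\<bar> < l \<and> (\<forall>b\<in>Basis. \<bar>(snd z - fst z) \<bullet> b\<bar> \<le> t)} \<in> sets (lborel \<Otimes>\<^sub>M lborel)"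
proof -
  have [measurable]: "Measurable.pred (lborel \<Otimes>\<^sub>M lborel) (\<lambda>z::(real^'n)\<times>(real^'n). \<forall>b\<in>Basis. \<bar>(snd z - fst z) \<bullet> b\<bar> \<le> t)"
  proof (rule pred_intros_finite)
    show "finite (Basis :: (real^'n) set)" by simp
    fix b :: "real^'n"
    show "Measurable.pred (lborel \<Otimes>\<^sub>M lborel) (\<lambda>z::(real^'n)\<times>(real^'n). \<bar>(snd z - fst z) \<bullet> b\<bar> \<le> t)"
      by measurable
  qed
  have p1: "Measurable.pred (lborel \<Otimes>\<^sub>M lborel) (\<lambda>z::(real^'n)\<times>(real^'n). l' \<le> \<bar>u (fst z)\<bar>)"
    using um by measurable
  have p2: "Measurable.pred (lborel \<Otimes>\<^sub>M lborel) (\<lambda>z::(real^'n)\<times>(real^'n). \<bar>u (snd z)\<bar> < l)"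
    using um by measurable
  have "Measurable.pred (lborel \<Otimes>\<^sub>M lborel) (\<lambda>z::(real^'n)\<times>(real^'n). l' \<le> \<bar>u (fst z)\<bar> \<and> \<bar>u (snd z)\<bar> < l \<and> (\<forall>b\<in>Basis. \<bar>(snd z - fst z) \<bullet> b\<bar> \<le> t))"
    using p1 p2 by measurable
  from predE[OF this] show ?thesis by (simp add: space_pair_measure)
qed

lemma cube_measure:
  fixes x :: "'a::euclidean_space" assumes "t \<ge> 0"
  shows "emeasure lborel (cbox (x - t *\<^sub>R One) (x + t *\<^sub>R One)) = ennreal ((2*t) ^ DIM('a))"
  using assms by (simp add: emeasure_lborel_cbox_eq inner_diff_left inner_add_left algebra_simps prod_constant)

lemma cube_mem:
  fixes x y :: "'a::euclidean_space"
  shows "y \<in> cbox (x - t *\<^sub>R One) (x + t *\<^sub>R One) \<longleftrightarrow> (\<forall>b\<in>Basis. \<bar>(y - x) \<bullet> b\<bar> \<le> t)"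
  by (auto simp: mem_box inner_diff_left inner_add_left abs_le_iff algebra_simps)

lemma cube_norm:
  fixes x y :: "'a::euclidean_space" and t :: real
  assumes "\<forall>b\<in>Basis. \<bar>(y - x) \<bullet> b\<bar> \<le> t"
  shows "norm (x - y) \<le> DIM('a) * t"
proof -
  have "norm (x - y) = norm (y - x)" by (simp add: norm_minus_commute)
  also have "\<dots> \<le> (\<Sum>b\<in>Basis. \<bar>(y - x) \<bullet> b\<bar>)" by (rule norm_le_l1)
  also have "\<dots> \<le> (\<Sum>b\<in>(Basis::'a set). t)" by (rule sum_mono) (use assms in auto)
  finally show ?thesis by simp
qed

definition Kc :: "real \<Rightarrow> real \<Rightarrow> real" where
  "Kc s dd = (dd * (2 powr (1 / dd) / 2)) powr (dd + 2 * s)"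

lemma Kc_pos: "d > 0 \<Longrightarrow> Kc s d > 0" by (simp add: Kc_def)

lemma lip_trunc: "\<bar>min (max (\<bar>a\<bar> - l) 0) h - min (max (\<bar>b\<bar> - l) 0) h\<bar> \<le> \<bar>a - b\<bar>" for a b l h :: real
  by (auto simp: min_def max_def abs_if)

lemma weak_level:
  fixes u :: "real^'n \<Rightarrow> real" and s l l' :: real
  defines "d \<equiv> real CARD('n)"
  assumes um: "u \<in> borel_measurable lborel"
    and s: "s > 0" and l: "0 < l" "l < l'"
    and fin: "emeasure lborel {x. l \<le> \<bar>u x\<bar>} < \<infinity>"
    and gfin: "gagliardo s u < \<infinity>"
  shows "measure lborel {x. l' \<le> \<bar>u x\<bar>} \<le> Kc s d * measure lborel {x. l \<le> \<bar>u x\<bar>} powr (2 * s / d) * enn2real (gagliardo s u) / (l' - l)^2"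
proof -
  define M where "M = measure lborel {x. l \<le> \<bar>u x\<bar>}"
  define M' where "M' = measure lborel {x. l' \<le> \<bar>u x\<bar>}"
  define B where "B = enn2real (gagliardo s u)"
  have d0: "d > 0" by (simp add: d_def)
  have setm: "{x. c \<le> \<bar>u x\<bar>} \<in> sets lborel" for c using um by measurable
  have eM: "emeasure lborel {x. l \<le> \<bar>u x\<bar>} = ennreal M"
    unfolding M_def using fin by (intro emeasure_eq_ennreal_measure) (auto simp: top_unique)
  have sub: "{x. l' \<le> \<bar>u x\<bar>} \<subseteq> {x. l \<le> \<bar>u x\<bar>}" using l by auto
  have le1: "emeasure lborel {x. l' \<le> \<bar>u x\<bar>} \<le> ennreal M"
    using emeasure_mono[OF sub setm] eM by simp
  then have eM': "emeasure lborel {x. l' \<le> \<bar>u x\<bar>} = ennreal M'"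
    unfolding M'_def by (intro emeasure_eq_ennreal_measure) (auto simp: top_unique)
  have M0: "M \<ge> 0" "M' \<ge> 0" by (auto simp: M_def M'_def)
  have M'M: "M' \<le> M" using le1 eM' M0 by simp
  have Bg: "gagliardo s u = ennreal B" using gfin by (simp add: B_def less_top ennreal_enn2real)
  have B0: "B \<ge> 0" by (simp add: B_def)
  have h0: "l' - l > 0" using l by simp
  show ?thesis
  proof (cases "M = 0")
    case True
    then have "M' = 0" using M'M M0 by simp
    then show ?thesis using True by (simp add: M_def[symmetric] M'_def[symmetric])
  next
    case False
    then have Mp: "M > 0" using M0 by simp
    define \<rho> where "\<rho> = 2 powr (1 / d) / 2"
    define t where "t = \<rho> * M powr (1 / d)"
    have t0: "t > 0" using Mp by (simp add: t_def \<rho>_def)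
    have "2 * t = (2 * M) powr (1 / d)" using Mp by (simp add: t_def \<rho>_def powr_mult)
    then have "(2*t) ^ CARD('n) = ((2 * M) powr (1 / d)) powr d"
      using Mp by (simp add: d_def powr_realpow)
    also have "\<dots> = 2 * M" using Mp d0 by (simp add: powr_powr)
    finally have t2: "(2*t) ^ CARD('n) = 2 * M" .
    define h where "h = l' - l"
    define v where "v x = min (max (\<bar>u x\<bar> - l) 0) h" for x
    define c where "c = h^2 / (d * t) powr (d + 2 * s)"
    define S where "S = {z::(real^'n)\<times>(real^'n). l' \<le> \<bar>u (fst z)\<bar> \<and> \<bar>u (snd z)\<bar> < l \<and> (\<forall>b\<in>Basis. \<bar>(snd z - fst z) \<bullet> b\<bar> \<le> t)}"
    have Sm: "S \<in> sets (lborel \<Otimes>\<^sub>M lborel)" unfolding S_def by (rule meas_S[OF um])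
    have c0: "c > 0" using h0 t0 d0 by (simp add: c_def h_def)
    have gv: "gagliardo s v \<le> gagliardo s u"
      unfolding gagliardo_def
    proof (rule nn_integral_mono)
      fix z :: "(real^'n)\<times>(real^'n)"
      have "\<bar>v (fst z) - v (snd z)\<bar> \<le> \<bar>u (fst z) - u (snd z)\<bar>"
        unfolding v_def by (rule lip_trunc)
      then have "(v (fst z) - v (snd z))^2 \<le> (u (fst z) - u (snd z))^2"
        by (simp add: abs_le_square_iff)
      then show "ennreal ((v (fst z) - v (snd z))^2 / norm (fst z - snd z) powr (real CARD('n) + 2 * s))
          \<le> ennreal ((u (fst z) - u (snd z))^2 / norm (fst z - snd z) powr (real CARD('n) + 2 * s))"
        by (intro ennreal_leI divide_right_mono) auto
    qed
    have pw: "ennreal c * indicator S z \<le> ennreal ((v (fst z) - v (snd z))^2 / norm (fst z - snd z) powr (real CARD('n) + 2 * s))" for z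
    proof (cases "z \<in> S")
      case False then show ?thesis by simp
    next
      case True
      obtain a b where z: "z = (a, b)" by fastforce
      have A: "l' \<le> \<bar>u a\<bar>" "\<bar>u b\<bar> < l" "\<forall>i\<in>Basis. \<bar>(b - a) \<bullet> i\<bar> \<le> t"
        using True by (auto simp: S_def z)
      have va: "v a = h" using A l by (simp add: v_def h_def)
      have vb: "v b = 0" using A h0 by (simp add: v_def h_def)
      have nle: "norm (a - b) \<le> d * t" using cube_norm[OF A(3)] by (simp add: d_def)
      have "a \<noteq> b" using A l by auto
      then have npos: "norm (a - b) > 0" by simp
      have "norm (a - b) powr (d + 2 * s) \<le> (d * t) powr (d + 2 * s)"
        by (rule powr_mono2) (use nle s d0 in auto)
      then have "c \<le> h^2 / norm (a - b) powr (d + 2 * s)"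
        unfolding c_def using npos h0 t0 d0 by (intro divide_left_mono) (auto simp: h_def)
      then show ?thesis using True by (simp add: z va vb d_def)
    qed
    have secm: "ennreal M \<le> emeasure lborel (Pair x -` S)" if x: "l' \<le> \<bar>u x\<bar>" for x
    proof -
      define C where "C = cbox (x - t *\<^sub>R One) (x + t *\<^sub>R One)"
      have sec: "Pair x -` S = {y. \<bar>u y\<bar> < l} \<inter> C"
        using x by (auto simp: S_def C_def cube_mem)
      have secm: "Pair x -` S \<in> sets lborel" unfolding sec C_def using um by measurable
      have eC: "emeasure lborel C = ennreal (2 * M)"
        using cube_measure[of t x] t0 t2 by (simp add: C_def)
      have "C \<subseteq> Pair x -` S \<union> {y. l \<le> \<bar>u y\<bar>}" by (auto simp: sec)
      then have "emeasure lborel C \<le> emeasure lborel (Pair x -` S \<union> {y. l \<le> \<bar>u y\<bar>})"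
        by (intro emeasure_mono) (use secm setm in auto)
      also have "\<dots> \<le> emeasure lborel (Pair x -` S) + emeasure lborel {y. l \<le> \<bar>u y\<bar>}"
        by (rule emeasure_subadditive) (use secm setm in auto)
      finally have ineq: "ennreal (2*M) \<le> emeasure lborel (Pair x -` S) + ennreal M" using eC eM by simp
      have "emeasure lborel (Pair x -` S) \<le> emeasure lborel C"
        by (rule emeasure_mono) (auto simp: sec C_def)
      then have fs: "emeasure lborel (Pair x -` S) \<noteq> top" using eC by (auto simp: top_unique)
      define m where "m = measure lborel (Pair x -` S)"
      have em: "emeasure lborel (Pair x -` S) = ennreal m"
        unfolding m_def using fs by (intro emeasure_eq_ennreal_measure)
      have m0: "m \<ge> 0" by (simp add: m_def)
      have "ennreal (m + M) = ennreal m + ennreal M" using m0 M0(1) by (rule ennreal_plus)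
      then have "ennreal (2*M) \<le> ennreal (m + M)" using ineq em by simp
      then have "2*M \<le> m + M" using m0 M0(1) by (subst (asm) ennreal_le_iff) auto
      then have "M \<le> m" by simp
      then show ?thesis using em by (simp add: ennreal_leI)
    qed
    have "ennreal M * ennreal M' = (\<integral>\<^sup>+ x. ennreal M * indicator {x. l' \<le> \<bar>u x\<bar>} x \<partial>lborel)"
      using eM' by (subst nn_integral_cmult_indicator[OF setm]) simp
    also have "\<dots> \<le> (\<integral>\<^sup>+ x. emeasure lborel (Pair x -` S) \<partial>lborel)"
      by (rule nn_integral_mono) (auto simp: indicator_def secm)
    also have "\<dots> = emeasure (lborel \<Otimes>\<^sub>M lborel) S"
      by (rule lborel.emeasure_pair_measure_alt[OF Sm, symmetric])
    finally have eS: "ennreal M * ennreal M' \<le> emeasure (lborel \<Otimes>\<^sub>M lborel) S" .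
    have "ennreal c * (ennreal M * ennreal M') \<le> ennreal c * emeasure (lborel \<Otimes>\<^sub>M lborel) S"
      by (rule mult_left_mono[OF eS]) simp
    also have "\<dots> = (\<integral>\<^sup>+ z. ennreal c * indicator S z \<partial>(lborel \<Otimes>\<^sub>M lborel))"
      by (rule nn_integral_cmult_indicator[OF Sm, symmetric])
    also have "\<dots> \<le> gagliardo s v"
      unfolding gagliardo_def by (rule nn_integral_mono) (rule pw)
    also have "\<dots> \<le> ennreal B" using gv Bg by simp
    finally have "ennreal (c * M * M') \<le> ennreal B"
      using c0 M0 by (simp add: ennreal_mult mult.assoc)
    then have main: "c * M * M' \<le> B" using B0 by (simp add: ennreal_le_iff)
    have key: "(d * t) powr (d + 2 * s) = Kc s d * M * M powr (2 * s / d)"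
    proof -
      have dt: "d * t = (d * \<rho>) * (M powr (1 / d))" by (simp add: t_def)
      have rp: "\<rho> > 0" by (simp add: \<rho>_def)
      have "(d * t) powr (d + 2 * s) = ((d * \<rho>) * (M powr (1 / d))) powr (d + 2 * s)" by (simp only: dt)
      also have "\<dots> = (d * \<rho>) powr (d + 2 * s) * (M powr (1 / d)) powr (d + 2 * s)"
        by (rule powr_mult)
      also have "(M powr (1 / d)) powr (d + 2 * s) = M powr (1 + 2 * s / d)"
        using d0 by (simp add: powr_powr field_simps)
      also have "\<dots> = M * M powr (2 * s / d)" using Mp by (simp add: powr_add)
      finally show ?thesis by (simp add: Kc_def \<rho>_def mult.assoc)
    qed
    have "M' \<le> B / (c * M)" using main c0 Mp by (simp add: field_simps)
    also have "B / (c * M) = Kc s d * M powr (2 * s / d) * B / h^2"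
      using Mp h0 t0 d0 unfolding c_def key h_def by (simp add: field_simps)
    finally show ?thesis by (simp add: M'_def M_def B_def h_def)
  qed
qed

fun es :: "real \<Rightarrow> nat \<Rightarrow> real" where
  "es g 0 = 2" | "es g (Suc j) = 2 + g * es g j"
fun ps :: "real \<Rightarrow> nat \<Rightarrow> real" where
  "ps g 0 = 0" | "ps g (Suc j) = 1 + g * ps g j"
fun cs :: "real \<Rightarrow> real \<Rightarrow> real \<Rightarrow> nat \<Rightarrow> real" where
  "cs a K g 0 = a" | "cs a K g (Suc j) = K * cs a K g j powr g * 2 powr (g * es g j + 2)"

lemma cs_pos: "a > 0 \<Longrightarrow> K > 0 \<Longrightarrow> cs a K g j > 0"
  by (induction j) auto

lemma iter_bound:
  fixes \<mu> :: "real \<Rightarrow> real"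
  assumes a: "a > 0" and K: "K > 0" and g: "g > 0" and B: "B > 0"
    and nn: "\<And>l. l > 0 \<Longrightarrow> 0 \<le> \<mu> l"
    and cheb: "\<And>l. l > 0 \<Longrightarrow> \<mu> l \<le> a / l^2"
    and rec: "\<And>l. l > 0 \<Longrightarrow> \<mu> (2*l) \<le> K * \<mu> l powr g * B / l^2"
  shows "l > 0 \<Longrightarrow> \<mu> l \<le> cs a K g j * B powr ps g j * l powr (- es g j)"
proof (induction j arbitrary: l)
  case 0
  then show ?case using cheb[OF 0] B by (simp add: powr_minus powr_realpow divide_simps)
next
  case (Suc j)
  define c where "c = cs a K g j"
  have c0: "c > 0" using cs_pos a K by (simp add: c_def)
  have l2: "l/2 > 0" using Suc by simp
  have "\<mu> l = \<mu> (2 * (l/2))" by simp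
  also have "\<dots> \<le> K * \<mu> (l/2) powr g * B / (l/2)^2" by (rule rec[OF l2])
  also have "\<dots> \<le> K * (c * B powr ps g j * (l/2) powr (- es g j)) powr g * B / (l/2)^2"
  proof -
    have "\<mu> (l/2) powr g \<le> (c * B powr ps g j * (l/2) powr (- es g j)) powr g"
      by (rule powr_mono2) (use g nn[OF l2] Suc.IH[OF l2] in \<open>auto simp: c_def\<close>)
    then show ?thesis using K B l2 by (intro divide_right_mono mult_right_mono mult_left_mono) auto
  qed
  also have "\<dots> = cs a K g (Suc j) * B powr ps g (Suc j) * l powr (- es g (Suc j))"
  proof -
    have e1: "(c * B powr ps g j * (l/2) powr (- es g j)) powr g
        = c powr g * B powr (g * ps g j) * (l/2) powr (- (g * es g j))"
      using c0 B l2 by (simp add: powr_mult powr_powr mult.commute)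
    have e2: "(l/2) powr (- (g * es g j)) = l powr (- (g * es g j)) * 2 powr (g * es g j)"
      using Suc.prems by (simp add: powr_divide powr_minus divide_simps)
    have e3: "1 / (l/2)^2 = l powr (-2) * 2 powr 2"
      using Suc.prems by (simp add: powr_minus powr_realpow divide_simps)
    have e4: "B powr (1 + g * ps g j) = B * B powr (g * ps g j)" using B by (simp add: powr_add)
    have e5: "l powr (- (2 + g * es g j)) = l powr (-2) * l powr (- (g * es g j))"
      by (simp add: powr_add[symmetric])
    have e6: "2 powr (g * es g j + 2) = 2 powr (g * es g j) * 2 powr 2" by (simp add: powr_add)
    have "K * (c * B powr ps g j * (l/2) powr (- es g j)) powr g * B / (l/2)^2
       = K * (c powr g * B powr (g * ps g j) * (l/2) powr (- (g * es g j))) * B * (1 / (l/2)^2)"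
      by (simp add: e1)
    also have "\<dots> = K * c powr g * 2 powr (g * es g j + 2) * (B * B powr (g * ps g j)) * (l powr (-2) * l powr (- (g * es g j)))"
      unfolding e2 e3 e6 by (simp add: algebra_simps)
    also have "\<dots> = cs a K g (Suc j) * B powr ps g (Suc j) * l powr (- es g (Suc j))"
      unfolding cs.simps ps.simps es.simps e4 e5 c_def by (simp add: ac_simps)
    finally show ?thesis .
  qed
  finally show ?case .
qed

lemma es_mono: "g > 0 \<Longrightarrow> es g j \<le> es g (Suc j)"
proof (induction j)
  case 0 then show ?case by simp
next
  case (Suc j)
  then show ?case by (simp add: mult_left_mono)
qed

lemma ps_mono: "g > 0 \<Longrightarrow> ps g j \<le> ps g (Suc j)"
proof (induction j)
  case 0 then show ?case by simp
next
  case (Suc j)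
  then show ?case by (simp add: mult_left_mono)
qed

lemma ps_ge: "g > 0 \<Longrightarrow> j \<ge> 2 \<Longrightarrow> ps g j \<ge> 1 + g"
proof -
  assume g: "g > 0" and j: "j \<ge> 2"
  have "ps g 2 \<le> ps g j" using lift_Suc_mono_le[of "ps g", OF ps_mono[OF g] j] .
  then show ?thesis by (simp add: numeral_2_eq_2)
qed

lemma es_big_ge1: "g \<ge> 1 \<Longrightarrow> es g j \<ge> 2 + 2 * real j"
proof (induction j)
  case 0 then show ?case by simp
next
  case (Suc j)
  have IH: "es g j \<ge> 2 + 2 * real j" using Suc.IH Suc.prems by simp
  have h: "g * es g j \<ge> 1 * es g j" using Suc.prems IH by (intro mult_right_mono) auto
  then have h': "g * es g j \<ge> es g j" by simp
  have "2 + 2 * real (Suc j) \<le> 2 + g * es g j" using h' IH by (smt (verit) of_nat_Suc)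
  then show ?case by simp
qed

lemma es_closed: "g \<noteq> 1 \<Longrightarrow> es g j = 2 / (1 - g) - g ^ j * (2 / (1 - g) - 2)"
proof (induction j)
  case 0 then show ?case by simp
next
  case (Suc j)
  then have "1 - g \<noteq> 0" by simp
  then have E: "2 + g * (2 / (1 - g)) = 2 / (1 - g)" by (simp add: field_simps)
  have "es g (Suc j) = 2 + g * (2/(1-g) - g^j*(2/(1-g)-2))" using Suc.IH Suc.prems by simp
  also have "\<dots> = (2 + g*(2/(1-g))) - g^Suc j * (2/(1-g)-2)" by (simp add: algebra_simps)
  finally show ?case using E by simp
qed

lemma J_exists:
  assumes g: "g > 0" and b: "g < 1 \<Longrightarrow> \<beta> < 2 / (1 - g)"
  shows "\<exists>J\<ge>2. es g J > \<beta>"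
proof (cases "g \<ge> 1")
  case True
  define J where "J = nat \<lceil>\<beta>\<rceil> + 2"
  have "es g J \<ge> 2 + 2 * real J" by (rule es_big_ge1[OF True])
  moreover have "real J \<ge> \<beta>" unfolding J_def by linarith
  ultimately show ?thesis by (intro exI[of _ J]) (auto simp: J_def)
next
  case False
  then have g1: "g < 1" by simp
  define E where "E = 2 / (1 - g)"
  have bE: "\<beta> < E" using b g1 by (simp add: E_def)
  have E2: "E - 2 > 0" using g g1 by (simp add: E_def field_simps)
  obtain n where n: "g ^ n < (E - \<beta>) / (E - 2)"
    using real_arch_pow_inv[of "(E - \<beta>) / (E - 2)" g] bE E2 g1 by auto
  have "g ^ (n + 2) \<le> g ^ n" using g g1 by (intro power_decreasing) auto
  then have i1: "g ^ (n+2) * (E - 2) \<le> g ^ n * (E - 2)" using E2 by (intro mult_right_mono) auto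
  have i2: "g ^ n * (E - 2) < E - \<beta>" using n E2 by (simp add: pos_less_divide_eq)
  have "g ^ (n+2) * (E - 2) < E - \<beta>" using i1 i2 by linarith
  then have "es g (n+2) > \<beta>" using es_closed[of g "n+2"] g1 by (simp add: E_def)
  then show ?thesis by (intro exI[of _ "n+2"]) auto
qed

lemma geom_ennreal:
  fixes x :: "nat \<Rightarrow> real"
  assumes "0 \<le> A" "0 \<le> q" "q < 1" "\<And>n. x n \<le> A * q ^ n"
  shows "(\<Sum>n. ennreal (x n)) \<le> ennreal (A / (1 - q))"
proof -
  have "(\<Sum>n. ennreal (x n)) \<le> (\<Sum>n. ennreal (A * q ^ n))"
    by (rule suminf_le) (auto intro: ennreal_leI assms)
  also have "\<dots> = ennreal (\<Sum>n. A * q ^ n)"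
    by (rule suminf_ennreal2) (use assms in \<open>auto intro: summable_mult summable_geometric\<close>)
  also have "(\<Sum>n. A * q ^ n) = A / (1 - q)"
    using assms by (simp add: suminf_mult suminf_geometric summable_geometric)
  finally show ?thesis .
qed

lemma interp:
  fixes x y1 y2 t :: real
  assumes "0 \<le> x" "x \<le> y1" "x \<le> y2" "0 \<le> t" "t \<le> 1"
  shows "x \<le> y1 powr (1 - t) * y2 powr t"
proof (cases "x = 0")
  case True then show ?thesis by simp
next
  case False
  then have "x = x powr (1 - t) * x powr t" using assms by (simp add: powr_add[symmetric])
  also have "\<dots> \<le> y1 powr (1 - t) * y2 powr t"
    by (intro mult_mono powr_mono2) (use assms in auto)
  finally show ?thesis .
qed

lemma alg_interp:
  fixes c1 c2 B l t p2 e1 e2 :: real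
  assumes "c1 > 0" "c2 > 0" "B > 0" "l > 0"
  shows "(c1 * B powr 1 * l powr (-e1)) powr (1-t) * (c2 * B powr p2 * l powr (-e2)) powr t
       = (c1 powr (1-t) * c2 powr t) * B powr ((1-t) + t*p2) * l powr (-((1-t)*e1 + t*e2))"
  using assms by (simp add: powr_def ln_mult exp_add[symmetric] algebra_simps)

lemma alg_large:
  fixes c B p e b :: real and n :: nat
  shows "2 powr ((real n + 1) * b) * (c * B powr p * (2 powr real n) powr (-e))
       = c * 2 powr b * B powr p * (2 powr (b - e)) ^ n"
  by (simp add: powr_power powr_powr powr_add[symmetric] algebra_simps)

lemma alg_small:
  fixes c B p e al :: real and n :: nat
  shows "2 powr (- (real n * al)) * (c * B powr p * (2 powr (- (real n + 1))) powr (-e))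
       = c * 2 powr e * B powr p * (2 powr (e - al)) ^ n"
  by (simp add: powr_power powr_powr powr_add[symmetric] algebra_simps)

lemma two_powr_neg_less1: "x < 0 \<Longrightarrow> (2::real) powr x < 1"
  using powr_less_mono[of x 0 2] by simp

lemma series_bound:
  fixes a K g \<alpha> \<beta> :: real
  assumes a: "a > 0" and K: "K > 0" and g: "g > 0" and al: "2 + 2*g < \<alpha>"
    and bcrit: "g < 1 \<Longrightarrow> \<beta> < 2 / (1 - g)"
  shows "\<exists>C \<theta>. \<theta> > 1 \<and> (\<forall>\<mu> B. 0 < B \<longrightarrow> B \<le> 1 \<longrightarrow> (\<forall>l>0. 0 \<le> \<mu> l) \<longrightarrow> (\<forall>l>0. \<mu> l \<le> a / l^2)
     \<longrightarrow> (\<forall>l>0. \<mu> (2*l) \<le> K * \<mu> l powr g * B / l^2)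
     \<longrightarrow> (\<Sum>n. ennreal (2 powr ((real n + 1) * \<beta>) * \<mu> (2 powr real n)))
        + (\<Sum>n. ennreal (2 powr (- (real n * \<alpha>)) * \<mu> (2 powr (- (real n + 1))))) \<le> ennreal (C * B powr \<theta>))"
proof -
  obtain J where J: "J \<ge> 2" "es g J > \<beta>" using J_exists[OF g bcrit] by auto
  define \<tau> where "\<tau> = min (1/2) ((\<alpha> - (2 + 2*g)) / (4 * g^2))"
  have \<tau>: "0 < \<tau>" "\<tau> \<le> 1/2" using al g by (auto simp: \<tau>_def)
  have \<tau>2: "\<tau> * (4 * g^2) \<le> \<alpha> - (2 + 2*g)"
    using g al by (simp add: \<tau>_def min_def field_simps split: if_splits)
  define \<theta> where "\<theta> = 1 + \<tau> * g"
  define E' where "E' = (1 - \<tau>) * (2 + 2*g) + \<tau> * (2 + 2*g + 2*g^2)"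
  have E'\<alpha>: "E' < \<alpha>"
  proof -
    have "E' = (2 + 2*g) + \<tau> * (2*g^2)" by (simp add: E'_def algebra_simps)
    moreover have "\<tau> * (2*g^2) < \<tau> * (4*g^2)" using \<tau> g by simp
    ultimately show ?thesis using \<tau>2 by linarith
  qed
  define c1 where "c1 = cs a K g 1"
  define c2 where "c2 = cs a K g 2"
  define c' where "c' = c1 powr (1 - \<tau>) * c2 powr \<tau>"
  define cJ where "cJ = cs a K g J"
  define q1 where "q1 = 2 powr (\<beta> - es g J)"
  define q2 where "q2 = 2 powr (E' - \<alpha>)"
  have q1: "0 \<le> q1" "q1 < 1" using J by (auto simp: q1_def intro!: two_powr_neg_less1)
  have q2: "0 \<le> q2" "q2 < 1" using E'\<alpha> by (auto simp: q2_def intro!: two_powr_neg_less1)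
  have c1p: "c1 > 0" and c2p: "c2 > 0" and cJp: "cJ > 0"
    unfolding c1_def c2_def cJ_def by (rule cs_pos[OF a K])+
  have c'p: "c' > 0" using c1p c2p by (simp add: c'_def)
  define C where "C = cJ * 2 powr \<beta> / (1 - q1) + c' * 2 powr E' / (1 - q2)"
  have psJ: "\<theta> \<le> ps g J"
  proof -
    have "\<theta> \<le> 1 + g" using \<tau> g by (simp add: \<theta>_def)
    also have "\<dots> \<le> ps g J" by (rule ps_ge[OF g J(1)])
    finally show ?thesis .
  qed
  show ?thesis
  proof (rule exI[of _ C], rule exI[of _ \<theta>], intro conjI allI impI)
    show "\<theta> > 1" using \<tau> g by (simp add: \<theta>_def)
    fix \<mu> :: "real \<Rightarrow> real" and B :: real
    assume B0: "0 < B" and B1: "B \<le> 1" and nn: "\<forall>l>0. 0 \<le> \<mu> l" and cheb: "\<forall>l>0. \<mu> l \<le> a / l^2"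
      and rec: "\<forall>l>0. \<mu> (2*l) \<le> K * \<mu> l powr g * B / l^2"
    have bound: "\<mu> l \<le> cs a K g j * B powr ps g j * l powr (- es g j)" if "l > 0" for j l
      by (rule iter_bound[OF a K g B0 _ _ _ that]) (use nn cheb rec in auto)
    have S1: "(\<Sum>n. ennreal (2 powr ((real n + 1) * \<beta>) * \<mu> (2 powr real n)))
        \<le> ennreal ((cJ * 2 powr \<beta> * B powr \<theta>) / (1 - q1))"
    proof (rule geom_ennreal[OF _ q1])
      show "0 \<le> cJ * 2 powr \<beta> * B powr \<theta>" using cJp by simp
      fix n :: nat
      have "2 powr ((real n + 1) * \<beta>) * \<mu> (2 powr real n)
          \<le> 2 powr ((real n + 1) * \<beta>) * (cJ * B powr ps g J * (2 powr real n) powr (- es g J))"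
        by (rule mult_left_mono) (use bound[of "2 powr real n" J] in \<open>auto simp: cJ_def\<close>)
      also have "\<dots> = cJ * 2 powr \<beta> * B powr ps g J * q1 ^ n"
        unfolding q1_def by (rule alg_large)
      also have "\<dots> \<le> cJ * 2 powr \<beta> * B powr \<theta> * q1 ^ n"
        using psJ B0 B1 cJp q1 by (intro mult_right_mono mult_left_mono powr_mono') auto
      finally show "2 powr ((real n + 1) * \<beta>) * \<mu> (2 powr real n) \<le> cJ * 2 powr \<beta> * B powr \<theta> * q1 ^ n" .
    qed
    have S2: "(\<Sum>n. ennreal (2 powr (- (real n * \<alpha>)) * \<mu> (2 powr (- (real n + 1)))))
        \<le> ennreal ((c' * 2 powr E' * B powr \<theta>) / (1 - q2))"
    proof (rule geom_ennreal[OF _ q2])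
      show "0 \<le> c' * 2 powr E' * B powr \<theta>" using c'p by simp
      fix n :: nat
      define l where "l = (2::real) powr (- (real n + 1))"
      have l0: "l > 0" by (simp add: l_def)
      have b1: "\<mu> l \<le> c1 * B powr 1 * l powr (- (2 + 2*g))"
        using bound[OF l0, of 1] by (simp add: c1_def mult.commute)
      have b2: "\<mu> l \<le> c2 * B powr (1 + g) * l powr (- (2 + 2*g + 2*g^2))"
        using bound[OF l0, of 2] by (simp add: c2_def numeral_2_eq_2 power2_eq_square algebra_simps)
      have "\<mu> l \<le> (c1 * B powr 1 * l powr (- (2 + 2*g))) powr (1 - \<tau>) * (c2 * B powr (1 + g) * l powr (- (2 + 2*g + 2*g^2))) powr \<tau>"
        by (rule interp[OF _ b1 b2]) (use nn l0 \<tau> in auto)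
      also have "\<dots> = c' * B powr \<theta> * l powr (- E')"
        unfolding alg_interp[OF c1p c2p B0 l0] c'_def \<theta>_def E'_def by (simp add: algebra_simps)
      finally have ml: "\<mu> l \<le> c' * B powr \<theta> * l powr (- E')" .
      have "2 powr (- (real n * \<alpha>)) * \<mu> l \<le> 2 powr (- (real n * \<alpha>)) * (c' * B powr \<theta> * l powr (- E'))"
        by (rule mult_left_mono[OF ml]) simp
      also have "\<dots> = c' * 2 powr E' * B powr \<theta> * q2 ^ n"
        unfolding q2_def l_def by (rule alg_small)
      finally show "2 powr (- (real n * \<alpha>)) * \<mu> (2 powr (- (real n + 1))) \<le> c' * 2 powr E' * B powr \<theta> * q2 ^ n"
        by (simp add: l_def)
    qed
    have "(\<Sum>n. ennreal (2 powr ((real n + 1) * \<beta>) * \<mu> (2 powr real n)))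
        + (\<Sum>n. ennreal (2 powr (- (real n * \<alpha>)) * \<mu> (2 powr (- (real n + 1)))))
        \<le> ennreal ((cJ * 2 powr \<beta> * B powr \<theta>) / (1 - q1)) + ennreal ((c' * 2 powr E' * B powr \<theta>) / (1 - q2))"
      by (rule add_mono[OF S1 S2])
    also have "\<dots> = ennreal ((cJ * 2 powr \<beta> * B powr \<theta>) / (1 - q1) + (c' * 2 powr E' * B powr \<theta>) / (1 - q2))"
      using q1 q2 cJp c'p by (intro ennreal_plus[symmetric]) auto
    also have "(cJ * 2 powr \<beta> * B powr \<theta>) / (1 - q1) + (c' * 2 powr E' * B powr \<theta>) / (1 - q2) = C * B powr \<theta>"
      by (simp add: C_def algebra_simps add_divide_distrib)
    finally show "(\<Sum>n. ennreal (2 powr ((real n + 1) * \<beta>) * \<mu> (2 powr real n)))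
        + (\<Sum>n. ennreal (2 powr (- (real n * \<alpha>)) * \<mu> (2 powr (- (real n + 1))))) \<le> ennreal (C * B powr \<theta>)" .
  qed
qed

lemma term_le_suminf_ennreal: "(f k :: ennreal) \<le> (\<Sum>n. f n)"
  using sum_le_suminf[of f "{k}"] by simp

lemma phi_pointwise:
  fixes r \<alpha> \<beta> :: real
  assumes r: "r \<ge> 0" and ab: "\<alpha> > 0" "\<beta> > 0"
  shows "ennreal (phi \<alpha> \<beta> r) \<le>
     (\<Sum>n. ennreal (2 powr ((real n + 1) * \<beta>)) * indicator {t. 2 powr real n \<le> t} r)
   + (\<Sum>n. ennreal (2 powr (- (real n * \<alpha>))) * indicator {t. 2 powr (- (real n + 1)) \<le> t} r)"
    (is "_ \<le> ?S1 + ?S2")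
proof (cases "r = 0")
  case True then show ?thesis by (simp add: phi_def)
next
  case False
  then have r0: "r > 0" using r by simp
  show ?thesis
  proof (cases "r \<ge> 1")
    case True
    define k where "k = nat \<lfloor>log 2 r\<rfloor>"
    have lg: "log 2 r \<ge> 0" using True by simp
    have k1: "real k \<le> log 2 r" using lg by (simp add: k_def)
    have k2: "log 2 r < real k + 1" using lg by (simp add: k_def)
    have "2 powr real k \<le> 2 powr log 2 r" using k1 by simp
    then have A: "2 powr real k \<le> r" using r0 by simp
    have "r = 2 powr log 2 r" using r0 by simp
    also have "\<dots> \<le> 2 powr (real k + 1)" using k2 by simp
    finally have B: "r \<le> 2 powr (real k + 1)" .
    have "phi \<alpha> \<beta> r \<le> (2 powr (real k + 1)) powr \<beta>"
    proof (cases "r \<le> 1")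
      case True
      then have "r = 1" using \<open>r \<ge> 1\<close> by simp
      then have "phi \<alpha> \<beta> r = 1 powr \<beta>" by (simp add: phi_def)
      then show ?thesis using B \<open>r = 1\<close> ab by (simp add: ge_one_powr_ge_zero)
    next
      case False
      then show ?thesis using B r0 ab by (simp add: phi_def powr_mono2)
    qed
    also have "\<dots> = 2 powr ((real k + 1) * \<beta>)" by (simp add: powr_powr)
    finally have "ennreal (phi \<alpha> \<beta> r) \<le> ennreal (2 powr ((real k + 1) * \<beta>)) * indicator {t. 2 powr real k \<le> t} r"
      using A by (simp add: ennreal_leI)
    also have "\<dots> \<le> ?S1" by (rule term_le_suminf_ennreal)
    also have "\<dots> \<le> ?S1 + ?S2" by simp
    finally show ?thesis .
  next
    case False
    then have r1: "r < 1" by simp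
    define k where "k = nat \<lfloor>- log 2 r\<rfloor>"
    have lg: "- log 2 r \<ge> 0" using r1 r0 by simp
    have k1: "real k \<le> - log 2 r" using lg by (simp add: k_def)
    have k2: "- log 2 r < real k + 1" using lg by (simp add: k_def)
    have "2 powr (- (real k + 1)) \<le> 2 powr log 2 r" using k2 by simp
    then have A: "2 powr (- (real k + 1)) \<le> r" using r0 by simp
    have "r = 2 powr log 2 r" using r0 by simp
    also have "\<dots> \<le> 2 powr (- real k)" using k1 by simp
    finally have B: "r \<le> 2 powr (- real k)" .
    have "phi \<alpha> \<beta> r = r powr \<alpha>" using r1 by (simp add: phi_def)
    also have "\<dots> \<le> (2 powr (- real k)) powr \<alpha>" using B r0 ab by (simp add: powr_mono2)
    also have "\<dots> = 2 powr (- (real k * \<alpha>))" by (simp add: powr_powr)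
    finally have "ennreal (phi \<alpha> \<beta> r) \<le> ennreal (2 powr (- (real k * \<alpha>))) * indicator {t. 2 powr (- (real k + 1)) \<le> t} r"
      using A by (simp add: ennreal_leI)
    also have "\<dots> \<le> ?S2" by (rule term_le_suminf_ennreal)
    also have "\<dots> \<le> ?S1 + ?S2" by simp
    finally show ?thesis .
  qed
qed

lemma layer_cake_phi:
  fixes u :: "real^'n \<Rightarrow> real" and \<alpha> \<beta> :: real
  assumes um: "u \<in> borel_measurable lborel" and ab: "\<alpha> > 0" "\<beta> > 0"
    and fin: "\<And>l. l > 0 \<Longrightarrow> emeasure lborel {x. l \<le> \<bar>u x\<bar>} < \<infinity>"
  shows "(\<integral>\<^sup>+ x. ennreal (phi \<alpha> \<beta> \<bar>u x\<bar>) \<partial>lborel) \<le>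
     (\<Sum>n. ennreal (2 powr ((real n + 1) * \<beta>) * measure lborel {x. 2 powr real n \<le> \<bar>u x\<bar>}))
   + (\<Sum>n. ennreal (2 powr (- (real n * \<alpha>)) * measure lborel {x. 2 powr (- (real n + 1)) \<le> \<bar>u x\<bar>}))"
proof -
  have setm: "{x. c \<le> \<bar>u x\<bar>} \<in> sets lborel" for c using um by measurable
  have em: "emeasure lborel {x. l \<le> \<bar>u x\<bar>} = ennreal (measure lborel {x. l \<le> \<bar>u x\<bar>})" if "l > 0" for l
    using fin[OF that] by (intro emeasure_eq_ennreal_measure) (auto simp: top_unique)
  have mf: "(\<lambda>x. ennreal c * indicator {x. l \<le> \<bar>u x\<bar>} x) \<in> borel_measurable lborel" for c l
    by (intro borel_measurable_times_ennreal borel_measurable_const borel_measurable_indicator setm)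
  have ind: "indicator {t. c \<le> t} \<bar>u x\<bar> = (indicator {x. c \<le> \<bar>u x\<bar>} x :: ennreal)" for c x
    by (simp add: indicator_def)
  have "(\<integral>\<^sup>+ x. ennreal (phi \<alpha> \<beta> \<bar>u x\<bar>) \<partial>lborel) \<le>
     (\<integral>\<^sup>+ x. (\<Sum>n. ennreal (2 powr ((real n + 1) * \<beta>)) * indicator {x. 2 powr real n \<le> \<bar>u x\<bar>} x)
   + (\<Sum>n. ennreal (2 powr (- (real n * \<alpha>))) * indicator {x. 2 powr (- (real n + 1)) \<le> \<bar>u x\<bar>} x) \<partial>lborel)"
  proof (rule nn_integral_mono)
    fix x
    show "ennreal (phi \<alpha> \<beta> \<bar>u x\<bar>) \<le> (\<Sum>n. ennreal (2 powr ((real n + 1) * \<beta>)) * indicator {x. 2 powr real n \<le> \<bar>u x\<bar>} x)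
   + (\<Sum>n. ennreal (2 powr (- (real n * \<alpha>))) * indicator {x. 2 powr (- (real n + 1)) \<le> \<bar>u x\<bar>} x)"
      using phi_pointwise[OF abs_ge_zero ab, of "u x"] by (simp only: ind)
  qed
  also have "\<dots> = (\<integral>\<^sup>+ x. (\<Sum>n. ennreal (2 powr ((real n + 1) * \<beta>)) * indicator {x. 2 powr real n \<le> \<bar>u x\<bar>} x) \<partial>lborel)
     + (\<integral>\<^sup>+ x. (\<Sum>n. ennreal (2 powr (- (real n * \<alpha>))) * indicator {x. 2 powr (- (real n + 1)) \<le> \<bar>u x\<bar>} x) \<partial>lborel)"
    by (rule nn_integral_add) (intro borel_measurable_suminf_order mf)+
  also have "(\<integral>\<^sup>+ x. (\<Sum>n. ennreal (2 powr ((real n + 1) * \<beta>)) * indicator {x. 2 powr real n \<le> \<bar>u x\<bar>} x) \<partial>lborel)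
     = (\<Sum>n. ennreal (2 powr ((real n + 1) * \<beta>) * measure lborel {x. 2 powr real n \<le> \<bar>u x\<bar>}))"
    by (subst nn_integral_suminf[OF mf]) (simp add: nn_integral_cmult_indicator[OF setm] em ennreal_mult)
  also have "(\<integral>\<^sup>+ x. (\<Sum>n. ennreal (2 powr (- (real n * \<alpha>))) * indicator {x. 2 powr (- (real n + 1)) \<le> \<bar>u x\<bar>} x) \<partial>lborel)
     = (\<Sum>n. ennreal (2 powr (- (real n * \<alpha>)) * measure lborel {x. 2 powr (- (real n + 1)) \<le> \<bar>u x\<bar>}))"
    by (subst nn_integral_suminf[OF mf]) (simp add: nn_integral_cmult_indicator[OF setm] em ennreal_mult)
  finally show ?thesis .
qed

lemma cheb:
  fixes u :: "real^'n \<Rightarrow> real"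
  assumes um: "u \<in> borel_measurable lborel" and ui: "integrable lborel (\<lambda>x. u x^2)" and l: "l > 0"
  shows "emeasure lborel {x. l \<le> \<bar>u x\<bar>} \<le> ennreal ((\<integral>x. u x^2 \<partial>lborel) / l^2)"
proof -
  have setm: "{x. l \<le> \<bar>u x\<bar>} \<in> sets lborel" using um by measurable
  have "emeasure lborel {x. l \<le> \<bar>u x\<bar>} = (\<integral>\<^sup>+ x. indicator {x. l \<le> \<bar>u x\<bar>} x \<partial>lborel)"
    using setm by simp
  also have "\<dots> \<le> (\<integral>\<^sup>+ x. ennreal (u x^2 / l^2) \<partial>lborel)"
  proof (rule nn_integral_mono)
    fix x
    show "indicator {x. l \<le> \<bar>u x\<bar>} x \<le> ennreal (u x^2 / l^2)"
    proof (cases "l \<le> \<bar>u x\<bar>")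
      case True
      then have "l^2 \<le> u x^2" using l by (metis abs_le_square_iff abs_of_pos)
      then have "1 \<le> u x^2 / l^2" using l by simp
      then show ?thesis using True by simp
    qed simp
  qed
  also have "\<dots> = ennreal (\<integral>x. u x^2 / l^2 \<partial>lborel)"
    by (rule nn_integral_eq_integral) (use ui in auto)
  also have "(\<integral>x. u x^2 / l^2 \<partial>lborel) = (\<integral>x. u x^2 \<partial>lborel) / l^2" by simp
  finally show ?thesis .
qed

lemma cheb_measure:
  fixes u :: "real^'n \<Rightarrow> real"
  assumes um: "u \<in> borel_measurable lborel" and ui: "integrable lborel (\<lambda>x. u x^2)" and l: "l > 0"
  shows "emeasure lborel {x. l \<le> \<bar>u x\<bar>} < \<infinity>"
    and "measure lborel {x. l \<le> \<bar>u x\<bar>} \<le> (\<integral>x. u x^2 \<partial>lborel) / l^2"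
proof -
  have c: "emeasure lborel {x. l \<le> \<bar>u x\<bar>} \<le> ennreal ((\<integral>x. u x^2 \<partial>lborel) / l^2)"
    by (rule cheb[OF assms])
  then show "emeasure lborel {x. l \<le> \<bar>u x\<bar>} < \<infinity>"
    using le_less_trans by fastforce
  have "0 \<le> (\<integral>x. u x^2 \<partial>lborel) / l^2" by simp
  then show "measure lborel {x. l \<le> \<bar>u x\<bar>} \<le> (\<integral>x. u x^2 \<partial>lborel) / l^2"
    using c by (simp add: measure_def enn2real_leI)
qed

lemma zero_gag:
  fixes u :: "real^'n \<Rightarrow> real"
  assumes um: "u \<in> borel_measurable lborel" and ui: "integrable lborel (\<lambda>x. u x^2)"
    and s: "s > 0" and gfin: "gagliardo s u < \<infinity>" and B0: "enn2real (gagliardo s u) = 0"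
  shows "(\<integral>x. u x^2 \<partial>lborel) = 0"
proof -
  have setm: "{x. c \<le> \<bar>u x\<bar>} \<in> sets lborel" for c using um by measurable
  have z: "emeasure lborel {x. l \<le> \<bar>u x\<bar>} = 0" if l: "l > 0" for l
  proof -
    have "measure lborel {x. (2 * (l/2)) \<le> \<bar>u x\<bar>} \<le> Kc s (real CARD('n)) * measure lborel {x. l/2 \<le> \<bar>u x\<bar>} powr (2 * s / real CARD('n)) * enn2real (gagliardo s u) / (2 * (l/2) - l/2)^2"
      by (rule weak_level[OF um s]) (use l cheb_measure(1)[OF um ui, of "l/2"] gfin in auto)
    then have "measure lborel {x. l \<le> \<bar>u x\<bar>} \<le> 0" using B0 by simp
    then have "measure lborel {x. l \<le> \<bar>u x\<bar>} = 0" by (simp add: antisym)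
    moreover have "emeasure lborel {x. l \<le> \<bar>u x\<bar>} = ennreal (measure lborel {x. l \<le> \<bar>u x\<bar>})"
      using cheb_measure(1)[OF um ui l] by (intro emeasure_eq_ennreal_measure) (auto simp: top_unique)
    ultimately show ?thesis by simp
  qed
  have "{x. u x \<noteq> 0} = (\<Union>n. {x. 1 / (real n + 1) \<le> \<bar>u x\<bar>})"
  proof (auto)
    fix x assume "u x \<noteq> 0"
    then have "\<bar>u x\<bar> > 0" by simp
    then obtain n where "1 / (real n + 1) < \<bar>u x\<bar>"
      using reals_Archimedean[of "\<bar>u x\<bar>"] by (auto simp: inverse_eq_divide) (metis add.commute of_nat_Suc)
    then show "\<exists>n. 1 / (real n + 1) \<le> \<bar>u x\<bar>" by (intro exI[of _ n]) simp
  qed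
  moreover have "(\<Union>n. {x. 1 / (real n + 1) \<le> \<bar>u x\<bar>}) \<in> null_sets lborel"
  proof (intro null_sets_UN)
    fix n :: nat
    have "emeasure lborel {x. 1 / (real n + 1) \<le> \<bar>u x\<bar>} = 0" by (rule z) simp
    then show "{x. 1 / (real n + 1) \<le> \<bar>u x\<bar>} \<in> null_sets lborel"
      using setm by (simp add: null_sets_def)
  qed
  ultimately have "{x. u x \<noteq> 0} \<in> null_sets lborel" by simp
  then have "AE x in lborel. u x = 0"
    by (auto simp: eventually_ae_filter intro!: exI[of _ "{x. u x \<noteq> 0}"])
  then have ae: "AE x in lborel. u x^2 = 0" by eventually_elim simp
  show ?thesis by (rule integral_eq_zero_AE[OF ae])
qed

lemma analytic_bound:
  fixes s a \<alpha> \<beta> :: real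
  assumes s: "s > 0" and a: "a > 0" and al: "2 + 2 * (2 * s / real CARD('n)) < \<alpha>"
    and bcrit: "2 * s / real CARD('n) < 1 \<Longrightarrow> \<beta> < 2 / (1 - 2 * s / real CARD('n))"
    and ab: "\<alpha> > 0" "\<beta> > 0"
  shows "\<exists>C \<theta>. \<theta> > 1 \<and> C \<ge> 0 \<and> (\<forall>u::real^'n\<Rightarrow>real. u \<in> borel_measurable lborel \<longrightarrow> integrable lborel (\<lambda>x. u x^2)
      \<longrightarrow> (\<integral>x. u x^2 \<partial>lborel) = a \<longrightarrow> gagliardo s u < \<infinity> \<longrightarrow> 0 < enn2real (gagliardo s u)
      \<longrightarrow> enn2real (gagliardo s u) \<le> 1
      \<longrightarrow> (\<integral>\<^sup>+ x. ennreal (phi \<alpha> \<beta> \<bar>u x\<bar>) \<partial>lborel) \<le> ennreal (C * enn2real (gagliardo s u) powr \<theta>))"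
proof -
  define d where "d = real CARD('n)"
  define \<gamma> where "\<gamma> = 2 * s / d"
  have d0: "d > 0" by (simp add: d_def)
  have g0: "\<gamma> > 0" using s d0 by (simp add: \<gamma>_def)
  have K0: "Kc s d > 0" by (rule Kc_pos[OF d0])
  have al': "2 + 2*\<gamma> < \<alpha>" using al by (simp add: \<gamma>_def d_def)
  have bc': "\<gamma> < 1 \<Longrightarrow> \<beta> < 2 / (1 - \<gamma>)" using bcrit by (simp add: \<gamma>_def d_def)
  obtain C \<theta> where \<theta>: "\<theta> > 1" and CB: "\<forall>\<mu> B. 0 < B \<longrightarrow> B \<le> 1 \<longrightarrow> (\<forall>l>0. 0 \<le> \<mu> l) \<longrightarrow> (\<forall>l>0. \<mu> l \<le> a / l^2)
     \<longrightarrow> (\<forall>l>0. \<mu> (2*l) \<le> Kc s d * \<mu> l powr \<gamma> * B / l^2)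
     \<longrightarrow> (\<Sum>n. ennreal (2 powr ((real n + 1) * \<beta>) * \<mu> (2 powr real n)))
        + (\<Sum>n. ennreal (2 powr (- (real n * \<alpha>)) * \<mu> (2 powr (- (real n + 1))))) \<le> ennreal (C * B powr \<theta>)"
    using series_bound[OF a K0 g0 al' bc'] by blast
  show ?thesis
  proof (rule exI[of _ "max C 0"], rule exI[of _ \<theta>], intro conjI allI impI)
    show "\<theta> > 1" by (rule \<theta>)
    show "max C 0 \<ge> 0" by simp
    fix u :: "real^'n \<Rightarrow> real"
    assume um: "u \<in> borel_measurable lborel" and ui: "integrable lborel (\<lambda>x. u x^2)"
      and ua: "(\<integral>x. u x^2 \<partial>lborel) = a" and gfin: "gagliardo s u < \<infinity>"
      and B0: "0 < enn2real (gagliardo s u)" and B1: "enn2real (gagliardo s u) \<le> 1"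
    define \<mu> where "\<mu> l = measure lborel {x. l \<le> \<bar>u x\<bar>}" for l
    have nn: "\<forall>l>0. 0 \<le> \<mu> l" by (simp add: \<mu>_def)
    have ch: "\<forall>l>0. \<mu> l \<le> a / l^2" using cheb_measure(2)[OF um ui] ua by (simp add: \<mu>_def)
    have rec: "\<forall>l>0. \<mu> (2*l) \<le> Kc s d * \<mu> l powr \<gamma> * enn2real (gagliardo s u) / l^2"
    proof (intro allI impI)
      fix l :: real assume l: "l > 0"
      have "measure lborel {x. 2 * l \<le> \<bar>u x\<bar>} \<le> Kc s (real CARD('n)) * measure lborel {x. l \<le> \<bar>u x\<bar>} powr (2 * s / real CARD('n)) * enn2real (gagliardo s u) / (2 * l - l)^2"
        by (rule weak_level[OF um s]) (use l cheb_measure(1)[OF um ui l] gfin in auto)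
      then show "\<mu> (2*l) \<le> Kc s d * \<mu> l powr \<gamma> * enn2real (gagliardo s u) / l^2"
        by (simp add: \<mu>_def d_def \<gamma>_def)
    qed
    have "(\<integral>\<^sup>+ x. ennreal (phi \<alpha> \<beta> \<bar>u x\<bar>) \<partial>lborel) \<le>
       (\<Sum>n. ennreal (2 powr ((real n + 1) * \<beta>) * \<mu> (2 powr real n)))
     + (\<Sum>n. ennreal (2 powr (- (real n * \<alpha>)) * \<mu> (2 powr (- (real n + 1)))))"
      unfolding \<mu>_def by (rule layer_cake_phi[OF um ab]) (rule cheb_measure(1)[OF um ui])
    also have "\<dots> \<le> ennreal (C * enn2real (gagliardo s u) powr \<theta>)"
      by (rule mp[OF mp[OF mp[OF mp[OF mp[OF spec[OF spec[OF CB, of \<mu>], of "enn2real (gagliardo s u)"] B0] B1] nn] ch] rec])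
    also have "\<dots> \<le> ennreal (max C 0 * enn2real (gagliardo s u) powr \<theta>)"
      by (intro ennreal_leI mult_right_mono) auto
    finally show "(\<integral>\<^sup>+ x. ennreal (phi \<alpha> \<beta> \<bar>u x\<bar>) \<partial>lborel) \<le> ennreal (max C 0 * enn2real (gagliardo s u) powr \<theta>)" .
  qed
qed

lemma phi_meas[measurable]: "(\<lambda>r. phi \<alpha> \<beta> r) \<in> borel_measurable borel"
  unfolding phi_def by measurable

lemma Gt_integral_bound:
  fixes u :: "real^'n \<Rightarrow> real" and F :: "real \<Rightarrow> real"
  assumes um: "u \<in> borel_measurable lborel" and Fm: "F \<in> borel_measurable borel"
    and Fnn: "\<And>s. F s \<ge> 0"
    and k: "k \<ge> 0" and Fle: "\<And>s. F s \<le> k * phi \<alpha> \<beta> \<bar>s\<bar>"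
    and X: "X \<ge> 0" and P: "(\<integral>\<^sup>+ x. ennreal (phi \<alpha> \<beta> \<bar>u x\<bar>) \<partial>lborel) \<le> ennreal X"
  shows "(\<integral>x. F (u x) \<partial>lborel) \<le> k * X"
proof (cases "integrable lborel (\<lambda>x. F (u x))")
  case False
  then show ?thesis using k X by (simp add: not_integrable_integral_eq)
next
  case True
  have "(\<integral>x. F (u x) \<partial>lborel) = enn2real (\<integral>\<^sup>+ x. ennreal (F (u x)) \<partial>lborel)"
    by (rule integral_eq_nn_integral) (use um Fm Fnn in auto)
  also have "\<dots> \<le> k * X"
  proof (rule enn2real_leI)
    show "0 \<le> k * X" using k X by simp
    have "(\<integral>\<^sup>+ x. ennreal (F (u x)) \<partial>lborel) \<le> (\<integral>\<^sup>+ x. ennreal k * ennreal (phi \<alpha> \<beta> \<bar>u x\<bar>) \<partial>lborel)"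
    proof (rule nn_integral_mono)
      fix x
      have ph: "phi \<alpha> \<beta> \<bar>u x\<bar> \<ge> 0" by (simp add: phi_def)
      have "ennreal (F (u x)) \<le> ennreal (k * phi \<alpha> \<beta> \<bar>u x\<bar>)" by (rule ennreal_leI[OF Fle])
      also have "\<dots> = ennreal k * ennreal (phi \<alpha> \<beta> \<bar>u x\<bar>)" by (rule ennreal_mult[OF k ph])
      finally show "ennreal (F (u x)) \<le> ennreal k * ennreal (phi \<alpha> \<beta> \<bar>u x\<bar>)" .
    qed
    also have "\<dots> = ennreal k * (\<integral>\<^sup>+ x. ennreal (phi \<alpha> \<beta> \<bar>u x\<bar>) \<partial>lborel)"
      by (rule nn_integral_cmult) (use um in measurable)
    also have "\<dots> \<le> ennreal k * ennreal X" by (rule mult_left_mono[OF P]) simp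
    also have "\<dots> = ennreal (k * X)" using k X by (simp add: ennreal_mult)
    finally show "(\<integral>\<^sup>+ x. ennreal (F (u x)) \<partial>lborel) \<le> ennreal (k * X)" .
  qed
  finally show ?thesis .
qed

theorem lemma3p5:
  fixes s1 s2 a \<alpha> \<beta> :: real and g :: "real \<Rightarrow> real"
  defines "d \<equiv> real CARD('n::finite)"
  assumes "0 < s1" "s1 < s2" "s2 < 1"
    and "2 * s1 < d" "d < 2 * s1 * s2 / (s2 - s1)"
    and "a > 0"
    and G1_cont: "continuous_on UNIV g" and G1_odd: "\<And>s. g (- s) = - g s"
    and G2_exps: "2 + 4 * s2 / d < \<alpha>" "\<alpha> < \<beta>" "\<beta> < 2 * d / (d - 2 * s1)"
    and G2_ineq: "\<And>s. \<alpha> * Gprim g s \<le> g s * s \<and> g s * s \<le> \<beta> * Gprim g s"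
    and G3_diff: "\<And>s. Gtilde g differentiable (at s)"
    and G3_ineq: "\<And>s. deriv (Gtilde g) s * s \<ge> \<alpha> * Gtilde g s"
  shows "m_level TYPE('n) s1 s2 g a > 0"
proof -
  note s1 = \<open>0 < s1\<close> and s12 = \<open>s1 < s2\<close> and d1 = \<open>2 * s1 < d\<close> and a0 = \<open>a > 0\<close>
  have d0: "d > 0" by (simp add: d_def)
  have s2: "s2 > 0" using s1 s12 by simp
  have al2: "\<alpha> > 2" using G2_exps(1) s2 d0 by (smt (verit) divide_pos_pos)
  have al0: "\<alpha> > 0" and be0: "\<beta> > 0" using al2 G2_exps(2) by auto
  note Gb = G_bounds[OF G1_cont G2_ineq al2 G2_exps(2)]
  define cG where "cG = max (Gprim g 1) (Gprim g (-1))"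
  have cG0: "cG \<ge> 0" using Gb(1)[of 1] by (simp add: cG_def)
  define k where "k = (\<beta>/2 - 1) * cG"
  have k0: "k \<ge> 0" using cG0 al2 G2_exps(2) by (simp add: k_def)
  have Gtle: "Gtilde g s \<le> k * phi \<alpha> \<beta> \<bar>s\<bar>" for s using Gb(3)[of s] by (simp add: k_def cG_def)
  define \<gamma> where "\<gamma> = 2 * s2 / d"
  have al': "2 + 2 * (2 * s2 / real CARD('n)) < \<alpha>" using G2_exps(1) by (simp add: d_def)
  have bc': "\<beta> < 2 / (1 - 2 * s2 / real CARD('n))" if "2 * s2 / real CARD('n) < 1"
  proof -
    have ds2: "2 * s2 < d" using that d0 by (simp add: d_def field_simps)
    have "2 * d / (d - 2 * s1) \<le> 2 * d / (d - 2 * s2)"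
      using ds2 s12 d0 by (intro divide_left_mono mult_pos_pos) auto
    also have "2 * d / (d - 2 * s2) = 2 / (1 - 2 * s2 / d)" using d0 ds2 by (simp add: field_simps)
    finally show ?thesis using G2_exps(3) by (simp add: d_def)
  qed
  obtain C \<theta> where \<theta>: "\<theta> > 1" and C0: "C \<ge> 0" and CB: "\<forall>u::real^'n\<Rightarrow>real. u \<in> borel_measurable lborel \<longrightarrow> integrable lborel (\<lambda>x. u x^2)
      \<longrightarrow> (\<integral>x. u x^2 \<partial>lborel) = a \<longrightarrow> gagliardo s2 u < \<infinity> \<longrightarrow> 0 < enn2real (gagliardo s2 u)
      \<longrightarrow> enn2real (gagliardo s2 u) \<le> 1
      \<longrightarrow> (\<integral>\<^sup>+ x. ennreal (phi \<alpha> \<beta> \<bar>u x\<bar>) \<partial>lborel) \<le> ennreal (C * enn2real (gagliardo s2 u) powr \<theta>)"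
    using analytic_bound[OF s2 a0 al' bc' al0 be0] by blast
  define Cp where "Cp = max 1 (d * k * C)"
  have Cp1: "Cp \<ge> 1" by (simp add: Cp_def)
  define b0 where "b0 = min 1 ((s2 / Cp) powr (1 / (\<theta> - 1)))"
  have b00: "b0 > 0" using s2 Cp1 by (simp add: b0_def)
  define \<kappa> where "\<kappa> = 1 / (d * (\<alpha>/2 - 1))"
  have \<kappa>0: "\<kappa> > 0" using d0 al2 by (simp add: \<kappa>_def)
  have \<kappa>s2: "\<kappa> * s2 < 1/2"
  proof -
    have "4 * s2 / d < \<alpha> - 2" using G2_exps(1) by simp
    then have "4 * s2 < (\<alpha> - 2) * d" using d0 by (simp add: field_simps)
    then show ?thesis using d0 al2 by (simp add: \<kappa>_def field_simps)
  qed
  define \<epsilon> where "\<epsilon> = 1/2 - \<kappa> * s2"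
  have \<epsilon>0: "\<epsilon> > 0" using \<kappa>s2 by (simp add: \<epsilon>_def)
  have contGt: "continuous_on UNIV (Gtilde g)"
    using G3_diff by (intro differentiable_imp_continuous_on) (auto simp: differentiable_on_def)
  have contG: "continuous_on UNIV (Gprim g)"
    using Gprim_deriv[OF G1_cont] by (intro continuous_at_imp_continuous_on ballI DERIV_isCont) auto
  have Gtm: "Gtilde g \<in> borel_measurable borel" by (rule borel_measurable_continuous_onI[OF contGt])
  have Gm: "Gprim g \<in> borel_measurable borel" by (rule borel_measurable_continuous_onI[OF contG])
  have main: "energy s1 s2 g u \<ge> \<epsilon> * b0" if uP: "u \<in> Pohozaev_set s1 s2 g a" for u :: "real^'n \<Rightarrow> real"
  proof -
    from uP have um: "u \<in> borel_measurable lborel" and ui: "integrable lborel (\<lambda>x. u x^2)"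
      and g1f: "gagliardo s1 u < \<infinity>" and g2f: "gagliardo s2 u < \<infinity>"
      and ua: "(\<integral>x. u x^2 \<partial>lborel) = a" and P0: "Pinf s1 s2 g u = 0"
      by (auto simp: Pohozaev_set_def Ssphere_def Hspace_def)
    define A where "A = enn2real (gagliardo s1 u)"
    define B where "B = enn2real (gagliardo s2 u)"
    define T where "T = (\<integral>x. Gtilde g (u x) \<partial>lborel)"
    have A0: "A \<ge> 0" and B0': "B \<ge> 0" by (auto simp: A_def B_def)
    have PT: "s1 * A + s2 * B = d * T" using P0 by (simp add: Pinf_def A_def B_def T_def d_def)
    have T0: "T \<ge> 0" unfolding T_def by (rule integral_nonneg_AE) (use Gb(2) in auto)
    have Bp: "B > 0"
    proof (rule ccontr)
      assume "\<not> B > 0"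
      then have "B = 0" using B0' by simp
      then have "(\<integral>x. u x^2 \<partial>lborel) = 0" using zero_gag[OF um ui s2 g2f] by (simp add: B_def)
      then show False using ua a0 by simp
    qed
    have Bb: "B \<ge> b0"
    proof (cases "B \<le> 1")
      case False then show ?thesis by (simp add: b0_def)
    next
      case True
      have P: "(\<integral>\<^sup>+ x. ennreal (phi \<alpha> \<beta> \<bar>u x\<bar>) \<partial>lborel) \<le> ennreal (C * B powr \<theta>)"
        using CB um ui ua g2f Bp True by (simp add: B_def)
      have "T \<le> k * (C * B powr \<theta>)" unfolding T_def
        by (rule Gt_integral_bound[OF um Gtm Gb(2) k0 Gtle _ P]) (use C0 in simp)
      then have "d * T \<le> d * (k * (C * B powr \<theta>))" using d0 by simp
      also have "\<dots> = (d * k * C) * B powr \<theta>" by simp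
      also have "\<dots> \<le> Cp * B powr \<theta>" by (intro mult_right_mono) (auto simp: Cp_def)
      finally have "s2 * B \<le> Cp * B powr \<theta>" using PT A0 s1 by (smt (verit) mult_nonneg_nonneg)
      also have "B powr \<theta> = B * B powr (\<theta> - 1)" using Bp by (simp add: powr_diff)
      finally have "s2 * B \<le> (Cp * B powr (\<theta> - 1)) * B" by (simp add: ac_simps)
      then have "s2 \<le> Cp * B powr (\<theta> - 1)" using Bp by simp
      then have sc: "s2 / Cp \<le> B powr (\<theta> - 1)" using Cp1 by (simp add: field_simps)
      have "(s2 / Cp) powr (1 / (\<theta> - 1)) \<le> (B powr (\<theta> - 1)) powr (1 / (\<theta> - 1))"
        by (rule powr_mono2) (use \<theta> s2 Cp1 sc in auto)
      also have "\<dots> = B" using \<theta> Bp by (simp add: powr_powr)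
      finally show ?thesis by (simp add: b0_def)
    qed
    have GI: "(\<integral>x. Gprim g (u x) \<partial>lborel) \<le> T / (\<alpha>/2 - 1)"
    proof (cases "integrable lborel (\<lambda>x. Gprim g (u x))")
      case False
      then show ?thesis using T0 al2 by (simp add: not_integrable_integral_eq)
    next
      case True
      have GtG: "(\<alpha>/2 - 1) * Gprim g s \<le> Gtilde g s" for s
        using G2_ineq[of s] by (simp add: Gtilde_def field_simps)
      have GtG2: "Gtilde g s \<le> (\<beta>/2 - 1) * Gprim g s" for s
        using G2_ineq[of s] by (simp add: Gtilde_def field_simps)
      have Ti: "integrable lborel (\<lambda>x. Gtilde g (u x))"
      proof (rule Bochner_Integration.integrable_bound[where f="\<lambda>x. (\<beta>/2 - 1) * Gprim g (u x)"])
        show "integrable lborel (\<lambda>x. (\<beta>/2 - 1) * Gprim g (u x))" using True by simp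
        show "(\<lambda>x. Gtilde g (u x)) \<in> borel_measurable lborel" using um Gtm by measurable
        show "AE x in lborel. norm (Gtilde g (u x)) \<le> norm ((\<beta>/2 - 1) * Gprim g (u x))"
          using Gb(1) Gb(2) GtG2 al2 G2_exps(2) by (auto simp: abs_mult)
      qed
      have "(\<alpha>/2 - 1) * (\<integral>x. Gprim g (u x) \<partial>lborel) = (\<integral>x. (\<alpha>/2 - 1) * Gprim g (u x) \<partial>lborel)" by simp
      also have "\<dots> \<le> T" unfolding T_def
        by (rule integral_mono) (use True Ti GtG in auto)
      finally show ?thesis using al2 by (simp add: field_simps)
    qed
    have "energy s1 s2 g u = A/2 + B/2 - (\<integral>x. Gprim g (u x) \<partial>lborel)"
      by (simp add: energy_def A_def B_def)
    also have "\<dots> \<ge> A/2 + B/2 - T / (\<alpha>/2 - 1)" using GI by simp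
    also have "T / (\<alpha>/2 - 1) = \<kappa> * (s1 * A + s2 * B)"
      using PT d0 al2 by (simp add: \<kappa>_def field_simps)
    also have "A/2 + B/2 - \<kappa> * (s1 * A + s2 * B) = (1/2 - \<kappa> * s1) * A + \<epsilon> * B"
      by (simp add: \<epsilon>_def algebra_simps)
    also have "(1/2 - \<kappa> * s1) * A + \<epsilon> * B \<ge> \<epsilon> * b0"
    proof -
      have "\<kappa> * s1 \<le> \<kappa> * s2" using \<kappa>0 s12 by simp
      then have "(1/2 - \<kappa> * s1) * A \<ge> 0" using \<kappa>s2 A0 by simp
      moreover have "\<epsilon> * B \<ge> \<epsilon> * b0" using \<epsilon>0 Bb by simp
      ultimately show ?thesis by simp
    qed
    finally show ?thesis .
  qed
  have "ereal (\<epsilon> * b0) \<le> m_level TYPE('n) s1 s2 g a"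
    unfolding m_level_def by (rule INF_greatest) (use main in simp)
  moreover have "ereal (\<epsilon> * b0) > 0" using \<epsilon>0 b00 by simp
  ultimately show ?thesis by (meson less_le_trans)
qed


end
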